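(* Let $H$ be a graph. Then there exists a local metric basis of $K_1+H$ containing the vertex of $K_1$ if and only if $H\in\mathcal{G}$.
   Context: All graphs are finite and simple with at least one vertex. $K_1+H$ is the join: a new vertex joined by edges to every vertex of $H$. $d_G$ is shortest-path distance ($+\infty$ between components), $d_{G,2}=\min\{d_G,2\}$; $s$ distinguishes $x,y$ w.r.t. $d$ if $d(s,x)\ne d(s,y)$. A local metric basis of a connected graph $G$ is a minimum-size set $S\subseteq V(G)$ such that any two adjacent vertices are distinguished w.r.t. $d_G$ by some vertex of $S$. A local adjacency basis of $H$ is a minimum-size set $S\subseteq V(H)$ such that any two adjacent vertices are distinguished w.r.t. $d_{H,2}$ by some vertex of $S$. $\mathcal{G}$: class of graphs $H$ such that every local adjacency basis $B$ of $H$ satisfies $B\subseteq N_H(v)$ for some $v\in V(H)$. *)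

theory Defs
  imports Main "HOL-Library.Extended_Nat"
begin

definition graph :: "'a set \<Rightarrow> ('a \<Rightarrow> 'a \<Rightarrow> bool) \<Rightarrow> bool" where
  "graph V E \<longleftrightarrow> finite V \<and> V \<noteq> {} \<and>
     (\<forall>x y. E x y \<longrightarrow> x \<in> V \<and> y \<in> V) \<and>
     (\<forall>x y. E x y \<longrightarrow> E y x) \<and> (\<forall>x. \<not> E x x)"

fun walk :: "('a \<Rightarrow> 'a \<Rightarrow> bool) \<Rightarrow> nat \<Rightarrow> 'a \<Rightarrow> 'a \<Rightarrow> bool" where
  "walk E 0 x y \<longleftrightarrow> x = y"
| "walk E (Suc n) x y \<longleftrightarrow> (\<exists>z. E x z \<and> walk E n z y)"

text \<open>Shortest-path distance; infinity if there is no walk (different components).\<close>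
definition gdist :: "('a \<Rightarrow> 'a \<Rightarrow> bool) \<Rightarrow> 'a \<Rightarrow> 'a \<Rightarrow> enat" where
  "gdist E x y = (INF n\<in>{n. walk E n x y}. enat n)"

definition gdist2 :: "('a \<Rightarrow> 'a \<Rightarrow> bool) \<Rightarrow> 'a \<Rightarrow> 'a \<Rightarrow> enat" where
  "gdist2 E x y = min (gdist E x y) 2"

definition local_resolving ::
  "('a \<Rightarrow> 'a \<Rightarrow> enat) \<Rightarrow> 'a set \<Rightarrow> ('a \<Rightarrow> 'a \<Rightarrow> bool) \<Rightarrow> 'a set \<Rightarrow> bool" where
  "local_resolving d V E S \<longleftrightarrow> S \<subseteq> V \<and>
     (\<forall>x y. E x y \<longrightarrow> (\<exists>s\<in>S. d s x \<noteq> d s y))"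

definition local_metric_basis :: "'a set \<Rightarrow> ('a \<Rightarrow> 'a \<Rightarrow> bool) \<Rightarrow> 'a set \<Rightarrow> bool" where
  "local_metric_basis V E S \<longleftrightarrow> local_resolving (gdist E) V E S \<and>
     (\<forall>T. local_resolving (gdist E) V E T \<longrightarrow> card S \<le> card T)"

definition local_adjacency_basis :: "'a set \<Rightarrow> ('a \<Rightarrow> 'a \<Rightarrow> bool) \<Rightarrow> 'a set \<Rightarrow> bool" where
  "local_adjacency_basis V E S \<longleftrightarrow> local_resolving (gdist2 E) V E S \<and>
     (\<forall>T. local_resolving (gdist2 E) V E T \<longrightarrow> card S \<le> card T)"

definition nbhd :: "('a \<Rightarrow> 'a \<Rightarrow> bool) \<Rightarrow> 'a \<Rightarrow> 'a set" where
  "nbhd E v = {u. E v u}"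

definition classG :: "'a set \<Rightarrow> ('a \<Rightarrow> 'a \<Rightarrow> bool) \<Rightarrow> bool" where
  "classG V E \<longleftrightarrow> (\<forall>B. local_adjacency_basis V E B \<longrightarrow> (\<exists>v\<in>V. B \<subseteq> nbhd E v))"

text \<open>The join K_1 + H: the new vertex is None, vertices of H are Some v.\<close>
definition join_V :: "'a set \<Rightarrow> 'a option set" where
  "join_V V = insert None (Some ` V)"

fun join_E :: "'a set \<Rightarrow> ('a \<Rightarrow> 'a \<Rightarrow> bool) \<Rightarrow> 'a option \<Rightarrow> 'a option \<Rightarrow> bool" where
  "join_E V E None None = False"
| "join_E V E None (Some y) = (y \<in> V)"
| "join_E V E (Some x) None = (x \<in> V)"
| "join_E V E (Some x) (Some y) = E x y"

end

theory Submission
  imports Defs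
begin

definition fd :: "('a \<Rightarrow> 'a \<Rightarrow> bool) \<Rightarrow> 'a \<Rightarrow> 'a \<Rightarrow> enat" where
  "fd E s x = (if s = x then 0 else if E s x then 1 else 2)"

lemma gdist_le: "walk E n x y \<Longrightarrow> gdist E x y \<le> enat n"
  unfolding gdist_def by (rule INF_lower) simp

lemma gdist_ge: "(\<And>n. walk E n x y \<Longrightarrow> m \<le> n) \<Longrightarrow> enat m \<le> gdist E x y"
  unfolding gdist_def by (rule INF_greatest) simp

lemma walk1: "walk E (Suc 0) x y \<longleftrightarrow> E x y" by simp

lemma gdist_refl: "gdist E x x = 0"
proof -
  have "gdist E x x \<le> enat 0" by (rule gdist_le) simp
  thus ?thesis by (metis antisym zero_enat_def zero_le)
qed

lemma gdist_adj: assumes "x \<noteq> y" "E x y" shows "gdist E x y = 1"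
proof -
  have "gdist E x y \<le> enat 1" by (rule gdist_le) (use assms in simp)
  moreover have "enat 1 \<le> gdist E x y"
  proof (rule gdist_ge)
    fix n assume "walk E n x y" thus "1 \<le> n" using assms by (cases n) auto
  qed
  ultimately show ?thesis by (simp add: one_enat_def)
qed

lemma gdist_ge2: assumes "x \<noteq> y" "\<not> E x y" shows "enat 2 \<le> gdist E x y"
proof (rule gdist_ge)
  fix n assume w: "walk E n x y"
  show "2 \<le> n"
  proof (cases n)
    case 0 thus ?thesis using w assms by simp
  next
    case (Suc m) thus ?thesis using w assms by (cases m) auto
  qed
qed

lemma gdist2_fd: "gdist2 E s x = fd E s x"
proof -
  consider "s = x" | "s \<noteq> x" "E s x" | "s \<noteq> x" "\<not> E s x" by blast
  thus ?thesis
  proof cases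
    case 1 thus ?thesis by (simp add: gdist2_def fd_def gdist_refl)
  next
    case 2 thus ?thesis by (simp add: gdist2_def fd_def gdist_adj)
  next
    case 3
    hence "enat 2 \<le> gdist E s x" by (rule gdist_ge2)
    hence "min (gdist E s x) 2 = 2" by (simp add: min_def numeral_eq_enat)
    thus ?thesis using 3 by (simp add: gdist2_def fd_def)
  qed
qed

lemma join_SS: assumes "s \<in> V" "x \<in> V"
  shows "gdist (join_E V E) (Some s) (Some x) = fd E s x"
proof -
  consider "s = x" | "s \<noteq> x" "E s x" | "s \<noteq> x" "\<not> E s x" by blast
  thus ?thesis
  proof cases
    case 1 thus ?thesis by (simp add: fd_def gdist_refl)
  next
    case 2 thus ?thesis by (simp add: fd_def gdist_adj)
  next
    case 3
    hence "enat 2 \<le> gdist (join_E V E) (Some s) (Some x)" by (intro gdist_ge2) auto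
    moreover have "gdist (join_E V E) (Some s) (Some x) \<le> enat 2"
      by (rule gdist_le) (use assms in \<open>auto simp: numeral_2_eq_2 intro: exI[of _ None]\<close>)
    ultimately show ?thesis using 3 by (simp add: fd_def numeral_eq_enat)
  qed
qed

lemma join_NS: "y \<in> V \<Longrightarrow> gdist (join_E V E) None (Some y) = 1"
  by (rule gdist_adj) auto

lemma join_SN: "y \<in> V \<Longrightarrow> gdist (join_E V E) (Some y) None = 1"
  by (rule gdist_adj) auto

lemma join_NN: "gdist (join_E V E) None None = 0"
  by (rule gdist_refl)

lemma resolve_J:
  assumes g: "graph V E" and B: "local_resolving (gdist2 E) V E B"
    and c: "None \<in> S \<or> (\<forall>y\<in>V. \<exists>z\<in>B. \<not> E y z)"
    and S: "S = insert None (Some ` B) \<or> S = Some ` B"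
  shows "local_resolving (gdist (join_E V E)) (join_V V) (join_E V E) S"
proof -
  have BV: "B \<subseteq> V" using B by (simp add: local_resolving_def)
  have sym: "\<And>x y. E x y \<Longrightarrow> E y x" and inV: "\<And>x y. E x y \<Longrightarrow> x \<in> V \<and> y \<in> V"
    and irr: "\<And>x. \<not> E x x" using g by (auto simp: graph_def)
  have SSV: "S \<subseteq> join_V V" using S BV by (auto simp: join_V_def)
  have SB: "Some ` B \<subseteq> S" using S by auto
  have main: "\<exists>s\<in>S. gdist (join_E V E) s x \<noteq> gdist (join_E V E) s y" if e: "join_E V E x y" for x y
  proof (cases x)
    case None
    then obtain y' where y: "y = Some y'" "y' \<in> V" using e by (cases y) auto
    show ?thesis
    proof (cases "None \<in> S")
      case True thus ?thesis using None y join_NN[of V E] join_NS[of y' V E] by (intro bexI[of _ None]) auto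
    next
      case False
      then obtain z where z: "z \<in> B" "\<not> E y' z" using c y by auto
      have "fd E z y' \<noteq> 1" using z sym unfolding fd_def by auto
      hence "gdist (join_E V E) (Some z) x \<noteq> gdist (join_E V E) (Some z) y"
        using None y z BV join_SN[of z V E] join_SS[of z V y' E] by auto
      thus ?thesis using SB z by blast
    qed
  next
    case (Some x')
    show ?thesis
    proof (cases y)
      case None
      show ?thesis
      proof (cases "None \<in> S")
        case True thus ?thesis using None Some e join_NN[of V E] join_NS[of x' V E]
          by (intro bexI[of _ None]) auto
      next
        case False
        then obtain z where z: "z \<in> B" "\<not> E x' z" using c e Some None by auto
        have "fd E z x' \<noteq> 1" using z sym unfolding fd_def by auto
        hence "gdist (join_E V E) (Some z) x \<noteq> gdist (join_E V E) (Some z) y"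
          using None Some e z BV join_SN[of z V E] join_SS[of z V x' E] by auto
        thus ?thesis using SB z by blast
      qed
    next
      case (Some y')
      have E: "E x' y'" using e Some \<open>x = Some x'\<close> by simp
      then obtain z where z: "z \<in> B" "gdist2 E z x' \<noteq> gdist2 E z y'" using B
        unfolding local_resolving_def by blast
      hence "gdist (join_E V E) (Some z) x \<noteq> gdist (join_E V E) (Some z) y"
        using Some \<open>x = Some x'\<close> BV inV[OF E] join_SS[of z V x' E] join_SS[of z V y' E]
        by (auto simp: gdist2_fd)
      thus ?thesis using SB z by blast
    qed
  qed
  show ?thesis using SSV main by (simp add: local_resolving_def)
qed

lemma resolve_H:
  assumes g: "graph V E" and T: "local_resolving (gdist (join_E V E)) (join_V V) (join_E V E) T"
  shows "local_resolving (gdist2 E) V E (Some -` T)"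
proof -
  have inV: "\<And>x y. E x y \<Longrightarrow> x \<in> V \<and> y \<in> V" using g by (auto simp: graph_def)
  have TV: "T \<subseteq> join_V V" using T by (simp add: local_resolving_def)
  have "\<exists>s\<in>Some -` T. gdist2 E s x \<noteq> gdist2 E s y" if e: "E x y" for x y
  proof -
    have "join_E V E (Some x) (Some y)" using e by simp
    then obtain s where s: "s \<in> T" "gdist (join_E V E) s (Some x) \<noteq> gdist (join_E V E) s (Some y)"
      using T unfolding local_resolving_def by blast
    show ?thesis
    proof (cases s)
      case None thus ?thesis using s inV[OF e] join_NS[of x V E] join_NS[of y V E] by auto
    next
      case (Some z)
      hence "z \<in> V" using s TV by (auto simp: join_V_def)
      thus ?thesis using s Some inV[OF e] join_SS[of z V x E] join_SS[of z V y E]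
        by (auto simp: gdist2_fd)
    qed
  qed
  moreover have "Some -` T \<subseteq> V" using TV by (auto simp: join_V_def)
  ultimately show ?thesis by (simp add: local_resolving_def)
qed

lemma card_opt: assumes "finite T"
  shows "card T = card (Some -` T) + (if None \<in> T then 1 else 0)"
proof -
  have eq: "T - {None} = Some ` (Some -` T)"
  proof (intro equalityI subsetI)
    fix t assume "t \<in> T - {None}" thus "t \<in> Some ` (Some -` T)" by (cases t) auto
  qed auto
  have "card (T - {None}) = card (Some -` T)" unfolding eq by (rule card_image) simp
  moreover have "None \<in> T \<Longrightarrow> card T > 0" using assms card_gt_0_iff by blast
  ultimately show ?thesis using assms by (cases "None \<in> T") (auto simp: card_Diff_singleton)
qed

lemma finite_jV: "graph V E \<Longrightarrow> finite (join_V V)"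
  by (simp add: graph_def join_V_def)

theorem proposition1:
  fixes V :: "'a set" and E :: "'a \<Rightarrow> 'a \<Rightarrow> bool"
  assumes "graph V E"
  shows "(\<exists>S. local_metric_basis (join_V V) (join_E V E) S \<and> None \<in> S) \<longleftrightarrow> classG V E"
proof
  assume "\<exists>S. local_metric_basis (join_V V) (join_E V E) S \<and> None \<in> S"
  then obtain S where S: "local_metric_basis (join_V V) (join_E V E) S" "None \<in> S" by blast
  have fS: "finite S" using S finite_jV[OF assms]
    by (auto simp: local_metric_basis_def local_resolving_def intro: finite_subset)
  show "classG V E" unfolding classG_def
  proof (intro allI impI, rule ccontr)
    fix B assume B: "local_adjacency_basis V E B" and nb: "\<not> (\<exists>v\<in>V. B \<subseteq> nbhd E v)"
    have c: "\<forall>y\<in>V. \<exists>z\<in>B. \<not> E y z" using nb by (auto simp: nbhd_def)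
    have "local_resolving (gdist (join_E V E)) (join_V V) (join_E V E) (Some ` B)"
      using B c by (intro resolve_J[OF assms]) (auto simp: local_adjacency_basis_def)
    hence "card S \<le> card (Some ` B)" using S by (simp add: local_metric_basis_def)
    also have "\<dots> = card B" by (rule card_image) simp
    also have "card B \<le> card (Some -` S)" using B resolve_H[OF assms] S
      by (auto simp: local_adjacency_basis_def local_metric_basis_def)
    finally show False using card_opt[OF fS] S by simp
  qed
next
  assume G: "classG V E"
  let ?lr = "local_resolving (gdist2 E) V E"
  have inV: "\<And>x y. E x y \<Longrightarrow> x \<in> V \<and> y \<in> V" and irr: "\<And>x. \<not> E x x"
    and sym: "\<And>x y. E x y \<Longrightarrow> E y x"
    using assms by (auto simp: graph_def)
  have "?lr V"
  proof -
    have "gdist2 E x x \<noteq> gdist2 E x y" if "E x y" for x y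
      using that irr by (auto simp: gdist2_fd fd_def)
    thus ?thesis using inV unfolding local_resolving_def by blast
  qed
  hence ex: "\<exists>n. \<exists>T. ?lr T \<and> card T = n" by blast
  obtain B where B: "?lr B" "card B = (LEAST n. \<exists>T. ?lr T \<and> card T = n)"
    using LeastI_ex[OF ex] by blast
  have Bmin: "card B \<le> card T" if "?lr T" for T
    unfolding B(2) by (rule Least_le) (use that in blast)
  have BV: "B \<subseteq> V" using B by (simp add: local_resolving_def)
  have fV: "finite V" using assms by (simp add: graph_def)
  have fB: "finite B" using BV fV by (rule finite_subset)
  let ?S = "insert None (Some ` B)"
  have Sres: "local_resolving (gdist (join_E V E)) (join_V V) (join_E V E) ?S"
    by (rule resolve_J[OF assms B(1)]) auto
  have cS: "card ?S = card B + 1"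
    using fB by (simp add: card_image)
  have "card ?S \<le> card T" if T: "local_resolving (gdist (join_E V E)) (join_V V) (join_E V E) T" for T
  proof -
    have fT: "finite T" using T finite_jV[OF assms]
      by (auto simp: local_resolving_def intro: finite_subset)
    have T': "?lr (Some -` T)" by (rule resolve_H[OF assms T])
    have le: "card B \<le> card (Some -` T)" using Bmin T' .
    show ?thesis
    proof (cases "None \<in> T")
      case True thus ?thesis using card_opt[OF fT] le cS by simp
    next
      case False
      show ?thesis
      proof (rule ccontr)
        assume "\<not> card ?S \<le> card T"
        hence eqc: "card (Some -` T) = card B" using card_opt[OF fT] False le cS by simp
        have "local_adjacency_basis V E (Some -` T)"
          unfolding local_adjacency_basis_def using T' eqc Bmin by auto
        then obtain v where v: "v \<in> V" "Some -` T \<subseteq> nbhd E v"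
          using G by (auto simp: classG_def)
        have "join_E V E None (Some v)" using v by simp
        then obtain s where s: "s \<in> T"
          "gdist (join_E V E) s None \<noteq> gdist (join_E V E) s (Some v)"
          using T unfolding local_resolving_def by blast
        obtain z where z: "s = Some z" using s False by (cases s) auto
        have "E v z" using v s z by (auto simp: nbhd_def)
        hence "fd E z v = 1" using sym irr by (auto simp: fd_def)
        thus False using s z v \<open>E v z\<close> inV join_SN[of z V E] join_SS[of z V v E] by auto
      qed
    qed
  qed
  hence "local_metric_basis (join_V V) (join_E V E) ?S"
    using Sres by (simp add: local_metric_basis_def)
  thus "\<exists>S. local_metric_basis (join_V V) (join_E V E) S \<and> None \<in> S" by blast
qed

end
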